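(* A paratopological group $G$ with identity $e$ is dense-connected if and only if $UV^{-1}=G$ for all open neighborhoods $U$ and $V$ of $e$.
   Context: A paratopological group is a group with a topology for which multiplication $G\times G\to G$ is jointly continuous (inversion need not be continuous; no separation axioms assumed). A space is dense-connected if every dense subset of it (with the subspace topology) is connected. *)

theory Defs
  imports "HOL-Analysis.Analysis" "HOL-Algebra.Group"
begin

definition paratopological_group :: "('a, 'b) monoid_scheme \<Rightarrow> 'a topology \<Rightarrow> bool" where
  "paratopological_group G T \<longleftrightarrow>
     group G \<and> topspace T = carrier G \<and>
     continuous_map (prod_topology T T) T (\<lambda>(x, y). x \<otimes>\<^bsub>G\<^esub> y)"

definition dense_connected :: "'a topology \<Rightarrow> bool" where
  "dense_connected T \<longleftrightarrow>
     (\<forall>D. D \<subseteq> topspace T \<and> T closure_of D = topspace T \<longrightarrow> connectedin T D)"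

end

theory Submission
  imports Defs
begin

definition hyperconn :: "'a topology \<Rightarrow> bool" where
  "hyperconn T \<longleftrightarrow> (\<forall>A B. openin T A \<and> openin T B \<and> A \<noteq> {} \<and> B \<noteq> {} \<longrightarrow> A \<inter> B \<noteq> {})"

lemma l21: fixes T :: "'a topology" assumes "C = topspace T - T closure_of A" shows "topspace T \<subseteq> T closure_of A \<union> C"
  using assms by auto
lemma l22: fixes T :: "'a topology" assumes "topspace T \<subseteq> T closure_of A \<union> C" "C \<subseteq> T closure_of C"
  shows "topspace T \<subseteq> T closure_of (A \<union> C)"
  using assms closure_of_Un[of T A C] by auto

lemma dc_imp_hyper:
  assumes "dense_connected T" shows "hyperconn T"
  unfolding hyperconn_def
proof (intro allI impI)
  fix A B assume h: "openin T A \<and> openin T B \<and> A \<noteq> {} \<and> B \<noteq> {}"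
  define C where "C = topspace T - T closure_of A"
  have oC: "openin T C" unfolding C_def by (simp add: openin_diff)
  have As: "A \<subseteq> topspace T" using h openin_subset by blast
  have Acl: "A \<subseteq> T closure_of A" using As closure_of_subset by blast
  have Cs0: "C \<subseteq> topspace T" unfolding C_def by blast
  have Cs: "C \<subseteq> T closure_of C" using closure_of_subset[OF Cs0] .
  have t1: "T closure_of A \<subseteq> topspace T" by (rule closure_of_subset_topspace)
  have t2: "T closure_of C \<subseteq> topspace T" by (rule closure_of_subset_topspace)
  have "topspace T \<subseteq> T closure_of A \<union> C" by (rule l21[OF C_def])
  then have "topspace T \<subseteq> T closure_of (A \<union> C)" using Cs by (rule l22)
  then have "T closure_of (A \<union> C) = topspace T" using closure_of_subset_topspace by (rule equalityI[rotated])
  moreover have "A \<union> C \<subseteq> topspace T" using As Cs0 by blast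
  ultimately have con: "connectedin T (A \<union> C)" using assms unfolding dense_connected_def by blast
  have disj: "A \<inter> C \<inter> (A \<union> C) = {}" using Acl unfolding C_def by auto
  have ne: "A \<inter> (A \<union> C) \<noteq> {}" using h by blast
  have "C = {}"
  proof (rule ccontr)
    assume "C \<noteq> {}"
    then have "C \<inter> (A \<union> C) \<noteq> {}" by blast
    then have "\<exists>E1 E2. openin T E1 \<and> openin T E2 \<and> A \<union> C \<subseteq> E1 \<union> E2 \<and> E1 \<inter> E2 \<inter> (A \<union> C) = {} \<and> E1 \<inter> (A \<union> C) \<noteq> {} \<and> E2 \<inter> (A \<union> C) \<noteq> {}"
      using h oC disj ne by (intro exI[of _ A] exI[of _ C]) simp
    then show False using con unfolding connectedin by blast
  qed
  then have "topspace T \<subseteq> T closure_of A" unfolding C_def by (simp only: Diff_eq_empty_iff)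
  then have "T closure_of A = topspace T" using closure_of_subset_topspace by (rule equalityI[rotated])
  then show "A \<inter> B \<noteq> {}" using h dense_intersects_open by blast
qed

lemma hyper_imp_dc:
  assumes "hyperconn T" shows "dense_connected T"
  unfolding dense_connected_def
proof (intro allI impI)
  fix D assume D: "D \<subseteq> topspace T \<and> T closure_of D = topspace T"
  show "connectedin T D" unfolding connectedin
  proof (intro conjI notI)
    show "D \<subseteq> topspace T" using D by blast
  next
    assume "\<exists>E1 E2. openin T E1 \<and> openin T E2 \<and> D \<subseteq> E1 \<union> E2 \<and> E1 \<inter> E2 \<inter> D = {} \<and> E1 \<inter> D \<noteq> {} \<and> E2 \<inter> D \<noteq> {}"
    then obtain E1 E2 where e: "openin T E1" "openin T E2" "E1 \<inter> E2 \<inter> D = {}" "E1 \<inter> D \<noteq> {}" "E2 \<inter> D \<noteq> {}"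
      by blast
    have "E1 \<inter> E2 \<noteq> {}" using assms e unfolding hyperconn_def by blast
    moreover have "openin T (E1 \<inter> E2)" using e by blast
    ultimately have "D \<inter> (E1 \<inter> E2) \<noteq> {}" using D dense_intersects_open by blast
    then show False using e by blast
  qed
qed

lemma left_transl_open:
  assumes P: "paratopological_group G T" and g: "g \<in> carrier G" and V: "openin T V"
  shows "openin T {x \<in> carrier G. g \<otimes>\<^bsub>G\<^esub> x \<in> V}"
proof -
  have ts: "topspace T = carrier G" and c: "continuous_map (prod_topology T T) T (\<lambda>(x, y). x \<otimes>\<^bsub>G\<^esub> y)"
    using P unfolding paratopological_group_def by auto
  have "continuous_map T (prod_topology T T) (\<lambda>x. (g, x))"
    by (intro continuous_map_pairedI) (auto simp: ts g)
  then have "continuous_map T T ((\<lambda>(x, y). x \<otimes>\<^bsub>G\<^esub> y) \<circ> (\<lambda>x. (g, x)))"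
    using c continuous_map_compose by blast
  then have "continuous_map T T (\<lambda>x. g \<otimes>\<^bsub>G\<^esub> x)" by (simp add: o_def)
  from openin_continuous_map_preimage[OF this V] show ?thesis by (simp add: ts)
qed

theorem theorem4p9:
  fixes G :: "('a, 'b) monoid_scheme" and T :: "'a topology"
  assumes "paratopological_group G T"
  shows "dense_connected T \<longleftrightarrow>
    (\<forall>U V. openin T U \<and> \<one>\<^bsub>G\<^esub> \<in> U \<and> openin T V \<and> \<one>\<^bsub>G\<^esub> \<in> V \<longrightarrow>
       {u \<otimes>\<^bsub>G\<^esub> inv\<^bsub>G\<^esub> v | u v. u \<in> U \<and> v \<in> V} = carrier G)"
proof -
  have grp: "group G" and ts: "topspace T = carrier G"
    using assms unfolding paratopological_group_def by auto
  interpret group G by (rule grp)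
  show ?thesis
  proof
    assume "dense_connected T"
    then have hc: "hyperconn T" by (rule dc_imp_hyper)
    show "\<forall>U V. openin T U \<and> \<one>\<^bsub>G\<^esub> \<in> U \<and> openin T V \<and> \<one>\<^bsub>G\<^esub> \<in> V \<longrightarrow>
       {u \<otimes>\<^bsub>G\<^esub> inv\<^bsub>G\<^esub> v | u v. u \<in> U \<and> v \<in> V} = carrier G"
    proof (intro allI impI)
      fix U V assume h: "openin T U \<and> \<one>\<^bsub>G\<^esub> \<in> U \<and> openin T V \<and> \<one>\<^bsub>G\<^esub> \<in> V"
      have Us: "U \<subseteq> carrier G" and Vs: "V \<subseteq> carrier G" using h openin_subset ts by blast+
      show "{u \<otimes>\<^bsub>G\<^esub> inv\<^bsub>G\<^esub> v | u v. u \<in> U \<and> v \<in> V} = carrier G"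
      proof
        show "{u \<otimes>\<^bsub>G\<^esub> inv\<^bsub>G\<^esub> v | u v. u \<in> U \<and> v \<in> V} \<subseteq> carrier G" using Us Vs by auto
      next
        show "carrier G \<subseteq> {u \<otimes>\<^bsub>G\<^esub> inv\<^bsub>G\<^esub> v | u v. u \<in> U \<and> v \<in> V}"
        proof
          fix g assume g: "g \<in> carrier G"
          let ?W = "{x \<in> carrier G. inv\<^bsub>G\<^esub> g \<otimes>\<^bsub>G\<^esub> x \<in> V}"
          have oW: "openin T ?W" using left_transl_open[OF assms _ ] g h by auto
          have "g \<in> ?W" using g h by simp
          then have "U \<inter> ?W \<noteq> {}" using hc h oW unfolding hyperconn_def by blast
          then obtain u where u: "u \<in> U" "u \<in> carrier G" "inv\<^bsub>G\<^esub> g \<otimes>\<^bsub>G\<^esub> u \<in> V" by blast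
          have "g = u \<otimes>\<^bsub>G\<^esub> inv\<^bsub>G\<^esub> (inv\<^bsub>G\<^esub> g \<otimes>\<^bsub>G\<^esub> u)" using g u
            by (simp add: inv_mult_group m_assoc[symmetric])
          then show "g \<in> {u \<otimes>\<^bsub>G\<^esub> inv\<^bsub>G\<^esub> v | u v. u \<in> U \<and> v \<in> V}" using u by blast
        qed
      qed
    qed
  next
    assume R: "\<forall>U V. openin T U \<and> \<one>\<^bsub>G\<^esub> \<in> U \<and> openin T V \<and> \<one>\<^bsub>G\<^esub> \<in> V \<longrightarrow>
       {u \<otimes>\<^bsub>G\<^esub> inv\<^bsub>G\<^esub> v | u v. u \<in> U \<and> v \<in> V} = carrier G"
    have "hyperconn T" unfolding hyperconn_def
    proof (intro allI impI)
      fix A B assume h: "openin T A \<and> openin T B \<and> A \<noteq> {} \<and> B \<noteq> {}"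
      then obtain a b where ab: "a \<in> A" "b \<in> B" by blast
      have ac: "a \<in> carrier G" and bc: "b \<in> carrier G" using ab h openin_subset ts by blast+
      let ?U = "{x \<in> carrier G. a \<otimes>\<^bsub>G\<^esub> x \<in> A}" and ?V = "{x \<in> carrier G. b \<otimes>\<^bsub>G\<^esub> x \<in> B}"
      have oU: "openin T ?U" using left_transl_open[OF assms ac] h by auto
      have oV: "openin T ?V" using left_transl_open[OF assms bc] h by auto
      have "inv\<^bsub>G\<^esub> a \<otimes>\<^bsub>G\<^esub> b \<in> carrier G" using ac bc by simp
      then have "inv\<^bsub>G\<^esub> a \<otimes>\<^bsub>G\<^esub> b \<in> {u \<otimes>\<^bsub>G\<^esub> inv\<^bsub>G\<^esub> v | u v. u \<in> ?U \<and> v \<in> ?V}"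
      proof -
        have "{u \<otimes>\<^bsub>G\<^esub> inv\<^bsub>G\<^esub> v | u v. u \<in> ?U \<and> v \<in> ?V} = carrier G"
          using R[rule_format, of ?U ?V] oU oV ab ac bc by simp
        then show ?thesis using \<open>inv\<^bsub>G\<^esub> a \<otimes>\<^bsub>G\<^esub> b \<in> carrier G\<close> by blast
      qed
      then obtain u v where uv: "u \<in> ?U" "v \<in> ?V" "inv\<^bsub>G\<^esub> a \<otimes>\<^bsub>G\<^esub> b = u \<otimes>\<^bsub>G\<^esub> inv\<^bsub>G\<^esub> v" by blast
      have "a \<otimes>\<^bsub>G\<^esub> u = b \<otimes>\<^bsub>G\<^esub> v"
      proof -
        have uc: "u \<in> carrier G" and vc: "v \<in> carrier G" using uv by auto
        have "u = (u \<otimes>\<^bsub>G\<^esub> inv\<^bsub>G\<^esub> v) \<otimes>\<^bsub>G\<^esub> v" using uc vc by (simp add: m_assoc)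
        also have "\<dots> = (inv\<^bsub>G\<^esub> a \<otimes>\<^bsub>G\<^esub> b) \<otimes>\<^bsub>G\<^esub> v" using uv by simp
        finally have "a \<otimes>\<^bsub>G\<^esub> u = a \<otimes>\<^bsub>G\<^esub> ((inv\<^bsub>G\<^esub> a \<otimes>\<^bsub>G\<^esub> b) \<otimes>\<^bsub>G\<^esub> v)" by simp
        also have "\<dots> = b \<otimes>\<^bsub>G\<^esub> v" using ac bc vc by (simp add: m_assoc[symmetric])
        finally show ?thesis .
      qed
      then show "A \<inter> B \<noteq> {}" using uv by auto
    qed
    then show "dense_connected T" by (rule hyper_imp_dc)
  qed
qed

end
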